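(* Let $D$ be a nonempty set and $\epsilon\subseteq D\times D$ a binary relation (write $\epsilon ab$ for $(a,b)\in\epsilon$) such that for all $a,b,c\in D$: $\epsilon ab\Rightarrow\epsilon aa$; $\epsilon ab\wedge\epsilon bc\Rightarrow\epsilon ac$; $\epsilon ab\wedge\epsilon bb\Rightarrow\epsilon ba$. Then $(D,\epsilon)$ satisfies, for all $a,b\in D$, $$\epsilon ab\iff\big(\exists x\in D\,(\epsilon xa\wedge\epsilon xb)\big)\wedge\big(\forall x,y\in D\,(\epsilon xa\wedge\epsilon ya\Rightarrow\epsilon xy)\big)$$ if and only if $D$ contains no singular name.
   Context: A model for $\mathbf{L_1}$ is a pair $(D,\epsilon)$ as in the hypothesis; it is a model for Leśniewski's ontology $\mathbf{L}$ if it satisfies the displayed equivalence (the axiom of $\mathbf{L}$) for all $a,b\in D$. An element $a\in D$ is an atom if $\epsilon aa$. An element $b\in D$ is a singular name if $b$ is not an atom (not $\epsilon bb$), there exists $a\in D$ with $\epsilon ab$, and for all $x,y\in D$, $\epsilon xb\wedge\epsilon yb$ implies $\epsilon xy$. *)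

theory Defs
  imports Main
begin

definition L1_model :: "'a set \<Rightarrow> ('a \<Rightarrow> 'a \<Rightarrow> bool) \<Rightarrow> bool" where
  "L1_model D eps \<longleftrightarrow> D \<noteq> {} \<and>
     (\<forall>a\<in>D. \<forall>b\<in>D. eps a b \<longrightarrow> eps a a) \<and>
     (\<forall>a\<in>D. \<forall>b\<in>D. \<forall>c\<in>D. eps a b \<and> eps b c \<longrightarrow> eps a c) \<and>
     (\<forall>a\<in>D. \<forall>b\<in>D. eps a b \<and> eps b b \<longrightarrow> eps b a)"

definition L_model :: "'a set \<Rightarrow> ('a \<Rightarrow> 'a \<Rightarrow> bool) \<Rightarrow> bool" where
  "L_model D eps \<longleftrightarrow> (\<forall>a\<in>D. \<forall>b\<in>D.
     eps a b \<longleftrightarrow> ((\<exists>x\<in>D. eps x a \<and> eps x b) \<and>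
                    (\<forall>x\<in>D. \<forall>y\<in>D. eps x a \<and> eps y a \<longrightarrow> eps x y)))"

definition atom :: "('a \<Rightarrow> 'a \<Rightarrow> bool) \<Rightarrow> 'a \<Rightarrow> bool" where
  "atom eps a \<longleftrightarrow> eps a a"

definition singular_name :: "'a set \<Rightarrow> ('a \<Rightarrow> 'a \<Rightarrow> bool) \<Rightarrow> 'a \<Rightarrow> bool" where
  "singular_name D eps b \<longleftrightarrow> \<not> atom eps b \<and> (\<exists>a\<in>D. eps a b) \<and>
     (\<forall>x\<in>D. \<forall>y\<in>D. eps x b \<and> eps y b \<longrightarrow> eps x y)"

end

theory Submission
  imports Defs
begin

theorem theorem5p2:
  fixes D :: "'a set" and eps :: "'a \<Rightarrow> 'a \<Rightarrow> bool"
  assumes "L1_model D eps"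
  shows "L_model D eps \<longleftrightarrow> \<not> (\<exists>b\<in>D. singular_name D eps b)"
proof -
  have r: "\<And>a b. a\<in>D \<Longrightarrow> b\<in>D \<Longrightarrow> eps a b \<Longrightarrow> eps a a"
   and t: "\<And>a b c. a\<in>D \<Longrightarrow> b\<in>D \<Longrightarrow> c\<in>D \<Longrightarrow> eps a b \<Longrightarrow> eps b c \<Longrightarrow> eps a c"
   and s: "\<And>a b. a\<in>D \<Longrightarrow> b\<in>D \<Longrightarrow> eps a b \<Longrightarrow> eps b b \<Longrightarrow> eps b a"
    using assms unfolding L1_model_def by blast+
  show ?thesis
  proof
    assume L: "L_model D eps"
    show "\<not> (\<exists>b\<in>D. singular_name D eps b)"
    proof
      assume "\<exists>b\<in>D. singular_name D eps b"
      then obtain b where b: "b \<in> D" "singular_name D eps b" by blast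
      then obtain a where a: "a \<in> D" "eps a b" unfolding singular_name_def by blast
      have "eps b b" using L b a r[OF a(1) b(1) a(2)] unfolding L_model_def singular_name_def by blast
      then show False using b unfolding singular_name_def atom_def by blast
    qed
  next
    assume ns: "\<not> (\<exists>b\<in>D. singular_name D eps b)"
    show "L_model D eps" unfolding L_model_def
    proof (intro ballI iffI)
      fix a b assume ab: "a \<in> D" "b \<in> D" "eps a b"
      have aa: "eps a a" using r ab by blast
      show "(\<exists>x\<in>D. eps x a \<and> eps x b) \<and> (\<forall>x\<in>D. \<forall>y\<in>D. eps x a \<and> eps y a \<longrightarrow> eps x y)"
      proof
        show "\<exists>x\<in>D. eps x a \<and> eps x b" using ab aa by blast
        show "\<forall>x\<in>D. \<forall>y\<in>D. eps x a \<and> eps y a \<longrightarrow> eps x y"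
        proof (intro ballI impI)
          fix x y assume xy: "x \<in> D" "y \<in> D" "eps x a \<and> eps y a"
          have "eps a y" using s[OF xy(2) ab(1)] xy aa by blast
          then show "eps x y" using t[OF xy(1) ab(1) xy(2)] xy by blast
        qed
      qed
    next
      fix a b assume ab: "a \<in> D" "b \<in> D"
        and h: "(\<exists>x\<in>D. eps x a \<and> eps x b) \<and> (\<forall>x\<in>D. \<forall>y\<in>D. eps x a \<and> eps y a \<longrightarrow> eps x y)"
      then obtain x where x: "x \<in> D" "eps x a" "eps x b" by blast
      have aa: "eps a a"
      proof (rule ccontr)
        assume "\<not> eps a a"
        then have "singular_name D eps a" using h x unfolding singular_name_def atom_def by blast
        then show False using ns ab by blast
      qed
      have "eps a x" using s[OF x(1) ab(1)] x aa by blast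
      then show "eps a b" using t[OF ab(1) x(1) ab(2)] x by blast
    qed
  qed
qed

end
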